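(* Let $\mathcal{G}=\langle A_\alpha,B_\alpha:\alpha<\omega_1\rangle$ be a tight gap and let $X_\mathcal{G}$ be the space on $\omega\cup\{\infty\}$ in which points of $\omega$ are isolated and the neighborhood filter of $\infty$ is generated by the sets $B_\alpha\cup\{\infty\}$, $\alpha<\omega_1$. Then (1) an infinite set $E\subseteq\omega$ converges to $\infty$ if and only if there is $\alpha<\omega_1$ with $E\subseteq^*A_\alpha$; and (2) $X_\mathcal{G}$ is a Fréchet $\alpha_1$-space.
   Context: A tight gap is a sequence $\langle A_\alpha,B_\alpha:\alpha<\omega_1\rangle$ of infinite subsets of $\omega$ such that for all $\alpha<\beta$, $A_\alpha\subseteq^*A_\beta$, $B_\beta\subseteq^*B_\alpha$ and $A_\beta\subseteq^*B_\alpha$; if $E\subseteq^*B_\alpha$ for all $\alpha$ then $E\subseteq^*A_\beta$ for some $\beta$; and if $E\supseteq^*A_\alpha$ for all $\alpha$ then $E\supseteq^*B_\beta$ for some $\beta$. Here $\subseteq^*$ means inclusion up to a finite set. An infinite $E\subseteq\omega$ converges to $\infty$ if every neighborhood of $\infty$ contains all but finitely many elements of $E$. A space is Fréchet if whenever $x\in\overline{A}$ some sequence in $A$ converges to $x$. A space is $\alpha_1$ if for every point $x$ and every countable family of sequences converging to $x$, there is a single sequence converging to $x$ which contains all but finitely many elements of each member of the family. *)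

theory Defs
  imports "HOL-Analysis.Analysis" "HOL-Library.Extended_Nat"
begin

definition almost_subset :: "nat set \<Rightarrow> nat set \<Rightarrow> bool" (infix "\<subseteq>\<^sup>*" 50) where
  "X \<subseteq>\<^sup>* Y \<longleftrightarrow> finite (X - Y)"

text \<open>An index type order-isomorphic to omega_1: a well-order that is uncountable
  and all of whose proper initial segments are countable.\<close>
definition omega1_type :: "'i::wellorder itself \<Rightarrow> bool" where
  "omega1_type _ \<longleftrightarrow> uncountable (UNIV :: 'i set) \<and> (\<forall>a::'i. countable {b. b < a})"

definition tight_gap :: "('i::wellorder \<Rightarrow> nat set) \<Rightarrow> ('i \<Rightarrow> nat set) \<Rightarrow> bool" where
  "tight_gap A B \<longleftrightarrow>
     (\<forall>\<alpha>. infinite (A \<alpha>) \<and> infinite (B \<alpha>)) \<and>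
     (\<forall>\<alpha> \<beta>. \<alpha> < \<beta> \<longrightarrow> A \<alpha> \<subseteq>\<^sup>* A \<beta> \<and> B \<beta> \<subseteq>\<^sup>* B \<alpha> \<and> A \<beta> \<subseteq>\<^sup>* B \<alpha>) \<and>
     (\<forall>E. (\<forall>\<alpha>. E \<subseteq>\<^sup>* B \<alpha>) \<longrightarrow> (\<exists>\<beta>. E \<subseteq>\<^sup>* A \<beta>)) \<and>
     (\<forall>E. (\<forall>\<alpha>. A \<alpha> \<subseteq>\<^sup>* E) \<longrightarrow> (\<exists>\<beta>. B \<beta> \<subseteq>\<^sup>* E))"

text \<open>The space X_G on omega \<union> {\<infinity>} (modelled as enat): points of omega are isolated,
  and the neighbourhood filter of \<infinity> is generated by the sets B_\<alpha> \<union> {\<infinity>}, i.e. consists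
  of the supersets of finite intersections of such sets.\<close>
definition gap_space :: "('i \<Rightarrow> nat set) \<Rightarrow> enat topology" where
  "gap_space B = topology (\<lambda>U. \<infinity> \<in> U \<longrightarrow>
      (\<exists>F. finite F \<and> (\<Inter>\<alpha>\<in>F. enat ` B \<alpha>) \<union> {\<infinity>} \<subseteq> U))"

definition converges_to_inf :: "enat topology \<Rightarrow> nat set \<Rightarrow> bool" where
  "converges_to_inf X E \<longleftrightarrow>
     (\<forall>U. openin X U \<and> \<infinity> \<in> U \<longrightarrow> finite {n\<in>E. enat n \<notin> U})"

definition frechet_space :: "'a topology \<Rightarrow> bool" where
  "frechet_space X \<longleftrightarrow>
     (\<forall>S x. S \<subseteq> topspace X \<and> x \<in> X closure_of S \<longrightarrow>
        (\<exists>\<sigma>::nat \<Rightarrow> 'a. range \<sigma> \<subseteq> S \<and> limitin X \<sigma> x sequentially))"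

definition alpha1_space :: "'a topology \<Rightarrow> bool" where
  "alpha1_space X \<longleftrightarrow>
     (\<forall>x \<in> topspace X. \<forall>s :: nat \<Rightarrow> nat \<Rightarrow> 'a.
        (\<forall>n. range (s n) \<subseteq> topspace X \<and> limitin X (s n) x sequentially) \<longrightarrow>
        (\<exists>t :: nat \<Rightarrow> 'a. range t \<subseteq> topspace X \<and> limitin X t x sequentially \<and>
                         (\<forall>n. finite (range (s n) - range t))))"

end

theory Submission imports Defs begin

lemma openin_gap:
  "openin (gap_space B) U \<longleftrightarrow> (\<infinity> \<in> U \<longrightarrow>
      (\<exists>F. finite F \<and> (\<Inter>\<alpha>\<in>F. enat ` B \<alpha>) \<union> {\<infinity>} \<subseteq> U))"
proof -
  have "istopology (\<lambda>U. \<infinity> \<in> U \<longrightarrow>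
      (\<exists>F. finite F \<and> (\<Inter>\<alpha>\<in>F. enat ` B \<alpha>) \<union> {\<infinity>} \<subseteq> U))"
    unfolding istopology_def
  proof (intro conjI allI impI ballI)
    fix S T assume S: "\<infinity> \<in> S \<longrightarrow> (\<exists>F. finite F \<and> (\<Inter>\<alpha>\<in>F. enat ` B \<alpha>) \<union> {\<infinity>} \<subseteq> S)"
      and T: "\<infinity> \<in> T \<longrightarrow> (\<exists>F. finite F \<and> (\<Inter>\<alpha>\<in>F. enat ` B \<alpha>) \<union> {\<infinity>} \<subseteq> T)"
      and "\<infinity> \<in> S \<inter> T"
    then obtain F1 F2 where f1: "finite F1" and s1: "(\<Inter>\<alpha>\<in>F1. enat ` B \<alpha>) \<union> {\<infinity>} \<subseteq> S"
      and f2: "finite F2" and s2: "(\<Inter>\<alpha>\<in>F2. enat ` B \<alpha>) \<union> {\<infinity>} \<subseteq> T" by auto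
    have h1: "(\<Inter>\<alpha>\<in>F1 \<union> F2. enat ` B \<alpha>) \<subseteq> (\<Inter>\<alpha>\<in>F1. enat ` B \<alpha>)"
      by (rule INT_anti_mono) auto
    have h2: "(\<Inter>\<alpha>\<in>F1 \<union> F2. enat ` B \<alpha>) \<subseteq> (\<Inter>\<alpha>\<in>F2. enat ` B \<alpha>)"
      by (rule INT_anti_mono) auto
    have "(\<Inter>\<alpha>\<in>F1 \<union> F2. enat ` B \<alpha>) \<union> {\<infinity>} \<subseteq> S \<inter> T"
      by (rule Int_greatest[OF subset_trans[OF Un_mono[OF h1 order_refl] s1]
                              subset_trans[OF Un_mono[OF h2 order_refl] s2]])
    with f1 f2 have "finite (F1 \<union> F2) \<and> (\<Inter>\<alpha>\<in>F1 \<union> F2. enat ` B \<alpha>) \<union> {\<infinity>} \<subseteq> S \<inter> T"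
      by simp
    then show "\<exists>F. finite F \<and> (\<Inter>\<alpha>\<in>F. enat ` B \<alpha>) \<union> {\<infinity>} \<subseteq> S \<inter> T" by (rule exI)
  next
    fix K assume K: "\<forall>k\<in>K. \<infinity> \<in> k \<longrightarrow> (\<exists>F. finite F \<and> (\<Inter>\<alpha>\<in>F. enat ` B \<alpha>) \<union> {\<infinity>} \<subseteq> k)"
      and "\<infinity> \<in> \<Union>K"
    then obtain k where k: "k \<in> K" "\<infinity> \<in> k" by blast
    with K obtain F where F: "finite F" "(\<Inter>\<alpha>\<in>F. enat ` B \<alpha>) \<union> {\<infinity>} \<subseteq> k" by blast
    have "k \<subseteq> \<Union>K" using k(1) by (rule Union_upper)
    with F have "finite F \<and> (\<Inter>\<alpha>\<in>F. enat ` B \<alpha>) \<union> {\<infinity>} \<subseteq> \<Union>K" by (meson subset_trans)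
    then show "\<exists>F. finite F \<and> (\<Inter>\<alpha>\<in>F. enat ` B \<alpha>) \<union> {\<infinity>} \<subseteq> \<Union>K" by (rule exI)
  qed
  then have eq: "openin (gap_space B) = (\<lambda>U. \<infinity> \<in> U \<longrightarrow>
      (\<exists>F. finite F \<and> (\<Inter>\<alpha>\<in>F. enat ` B \<alpha>) \<union> {\<infinity>} \<subseteq> U))"
    unfolding gap_space_def by (rule topology_inverse')
  show ?thesis by (simp only: eq)
qed

lemma topspace_gap: "topspace (gap_space B) = UNIV"
proof -
  have "openin (gap_space B) UNIV"
    unfolding openin_gap by (intro impI exI[of _ "{}"]) simp
  then have "UNIV \<subseteq> topspace (gap_space B)" by (rule openin_subset)
  then show ?thesis by (rule top.extremum_uniqueI)
qed

lemma asub_trans: "X \<subseteq>\<^sup>* Y \<Longrightarrow> Y \<subseteq>\<^sup>* Z \<Longrightarrow> X \<subseteq>\<^sup>* Z"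
  unfolding almost_subset_def by (rule finite_subset[of _ "(X - Y) \<union> (Y - Z)"]) auto

lemma asub_mono: "X \<subseteq> Y \<Longrightarrow> X \<subseteq>\<^sup>* Y"
  unfolding almost_subset_def by (metis Diff_eq_empty_iff finite.emptyI)

lemma conv_iff: "converges_to_inf (gap_space B) E \<longleftrightarrow> (\<forall>\<alpha>. E \<subseteq>\<^sup>* B \<alpha>)"
proof
  assume c: "converges_to_inf (gap_space B) E"
  show "\<forall>\<alpha>. E \<subseteq>\<^sup>* B \<alpha>"
  proof
    fix \<alpha>
    have "openin (gap_space B) (enat ` B \<alpha> \<union> {\<infinity>})"
      unfolding openin_gap by (intro impI exI[of _ "{\<alpha>}"]) auto
    with c have "finite {n\<in>E. enat n \<notin> enat ` B \<alpha> \<union> {\<infinity>}}"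
      unfolding converges_to_inf_def by auto
    moreover have "{n\<in>E. enat n \<notin> enat ` B \<alpha> \<union> {\<infinity>}} = E - B \<alpha>" by auto
    ultimately show "E \<subseteq>\<^sup>* B \<alpha>" unfolding almost_subset_def by simp
  qed
next
  assume h: "\<forall>\<alpha>. E \<subseteq>\<^sup>* B \<alpha>"
  show "converges_to_inf (gap_space B) E"
    unfolding converges_to_inf_def
  proof (intro allI impI)
    fix U assume "openin (gap_space B) U \<and> \<infinity> \<in> U"
    then obtain F where F: "finite F" "(\<Inter>\<alpha>\<in>F. enat ` B \<alpha>) \<union> {\<infinity>} \<subseteq> U"
      unfolding openin_gap by auto
    have "{n\<in>E. enat n \<notin> U} \<subseteq> (\<Union>\<alpha>\<in>F. E - B \<alpha>)"
      using F(2) by auto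
    moreover have "finite (\<Union>\<alpha>\<in>F. E - B \<alpha>)"
      using F(1) h unfolding almost_subset_def by (intro finite_UN_I) auto
    ultimately show "finite {n\<in>E. enat n \<notin> U}" by (rule finite_subset)
  qed
qed

lemma conv_limit:
  assumes "converges_to_inf (gap_space B) E" "inj \<sigma>" "range \<sigma> \<subseteq> E"
  shows "limitin (gap_space B) (\<lambda>n. enat (\<sigma> n)) \<infinity> sequentially"
  unfolding limitin_def topspace_gap
proof (intro conjI allI impI UNIV_I)
  fix U assume U: "openin (gap_space B) U \<and> \<infinity> \<in> U"
  have "{n. enat (\<sigma> n) \<notin> U} \<subseteq> \<sigma> -` {n\<in>E. enat n \<notin> U}" using assms(3) by auto
  moreover have "finite (\<sigma> -` {n\<in>E. enat n \<notin> U})"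
    using assms(1) U assms(2) unfolding converges_to_inf_def
    by (intro finite_vimageI) auto
  ultimately have "finite {n. enat (\<sigma> n) \<notin> U}" by (rule finite_subset)
  then show "eventually (\<lambda>n. enat (\<sigma> n) \<in> U) sequentially"
    unfolding cofinite_eq_sequentially[symmetric] eventually_cofinite by simp
qed

lemma inf_limit:
  assumes "converges_to_inf (gap_space B) E" "infinite E"
  shows "limitin (gap_space B) (\<lambda>n. enat (enumerate E n)) \<infinity> sequentially"
  by (rule conv_limit[OF assms(1)]) (auto simp: range_enumerate[OF assms(2)]
      strict_mono_imp_inj_on[OF strict_mono_enumerate[OF assms(2)]])

lemma countable_bound:
  assumes "omega1_type TYPE('i::wellorder)" "countable (I :: 'i set)"
  shows "\<exists>\<beta>. \<forall>i\<in>I. i < \<beta>"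
proof (rule ccontr)
  assume "\<not> ?thesis"
  then have "UNIV \<subseteq> (\<Union>i\<in>I. {b. b < i} \<union> {i})"
    by (auto simp: not_less) (metis le_less)
  moreover have "countable (\<Union>i\<in>I. {b. b < i} \<union> {i})"
    using assms unfolding omega1_type_def by auto
  ultimately have "countable (UNIV :: 'i set)" by (rule countable_subset)
  with assms(1) show False unfolding omega1_type_def by simp
qed

theorem mainTheorem7:
  fixes A B :: "'i::wellorder \<Rightarrow> nat set"
  assumes "omega1_type TYPE('i)"
    and "tight_gap A B"
  shows "(\<forall>E. infinite E \<longrightarrow>
            (converges_to_inf (gap_space B) E \<longleftrightarrow> (\<exists>\<alpha>. E \<subseteq>\<^sup>* A \<alpha>)))
       \<and> frechet_space (gap_space B) \<and> alpha1_space (gap_space B)"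
proof -
  have tgA: "\<And>\<alpha> \<beta>. \<alpha> < \<beta> \<Longrightarrow> A \<alpha> \<subseteq>\<^sup>* A \<beta>"
    and tgAB: "\<And>\<alpha> \<beta>. \<alpha> < \<beta> \<Longrightarrow> A \<beta> \<subseteq>\<^sup>* B \<alpha>"
    and tg3: "\<And>E. (\<forall>\<alpha>. E \<subseteq>\<^sup>* B \<alpha>) \<Longrightarrow> (\<exists>\<beta>. E \<subseteq>\<^sup>* A \<beta>)"
    and tg4: "\<And>E. (\<forall>\<alpha>. A \<alpha> \<subseteq>\<^sup>* E) \<Longrightarrow> (\<exists>\<beta>. B \<beta> \<subseteq>\<^sup>* E)"
    using assms(2) unfolding tight_gap_def by auto
  have A_conv: "E \<subseteq>\<^sup>* B \<gamma>" if "E \<subseteq>\<^sup>* A \<alpha>" for E \<alpha> \<gamma>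
  proof -
    obtain \<delta> where "\<forall>i\<in>{\<alpha>,\<gamma>}. i < \<delta>"
      using countable_bound[OF assms(1), of "{\<alpha>,\<gamma>}"] by auto
    then have "\<alpha> < \<delta>" "\<gamma> < \<delta>" by auto
    show ?thesis
      by (rule asub_trans[OF asub_trans[OF that tgA[OF \<open>\<alpha> < \<delta>\<close>]] tgAB[OF \<open>\<gamma> < \<delta>\<close>]])
  qed
  have P1: "converges_to_inf (gap_space B) E \<longleftrightarrow> (\<exists>\<alpha>. E \<subseteq>\<^sup>* A \<alpha>)" for E
    unfolding conv_iff using A_conv tg3 by blast
  have fre: "frechet_space (gap_space B)"
    unfolding frechet_space_def
  proof (intro allI impI)
    fix S x assume "S \<subseteq> topspace (gap_space B) \<and> x \<in> gap_space B closure_of S"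
    then have cl: "\<And>T. x \<in> T \<Longrightarrow> openin (gap_space B) T \<Longrightarrow> \<exists>y. y \<in> S \<and> y \<in> T"
      unfolding in_closure_of by blast
    show "\<exists>\<sigma>::nat \<Rightarrow> enat. range \<sigma> \<subseteq> S \<and> limitin (gap_space B) \<sigma> x sequentially"
    proof (cases "x \<in> S")
      case True
      then show ?thesis by (intro exI[of _ "\<lambda>_. x"]) (auto simp: topspace_gap)
    next
      case xS: False
      show ?thesis
      proof (cases "x = \<infinity>")
        case False
        then obtain m where m: "x = enat m" by (cases x) auto
        have "openin (gap_space B) {enat m}" unfolding openin_gap by simp
        with cl[of "{enat m}"] m xS show ?thesis by auto
      next
        case xinf: True
        define D where "D = {n. enat n \<in> S}"
        show ?thesis
        proof (cases "\<exists>n\<in>D. \<forall>\<alpha>. n \<in> B \<alpha>")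
          case True
          then obtain n where n: "n \<in> D" "\<forall>\<alpha>. n \<in> B \<alpha>" by blast
          have "limitin (gap_space B) (\<lambda>_. enat n) \<infinity> sequentially"
            unfolding limitin_def topspace_gap
          proof (intro conjI allI impI UNIV_I)
            fix U assume "openin (gap_space B) U \<and> \<infinity> \<in> U"
            then obtain F where F: "(\<Inter>\<alpha>\<in>F. enat ` B \<alpha>) \<union> {\<infinity>} \<subseteq> U"
              unfolding openin_gap by auto
            have "enat n \<in> (\<Inter>\<alpha>\<in>F. enat ` B \<alpha>)" using n(2) by auto
            with F show "\<forall>\<^sub>F j in sequentially. enat n \<in> U" by auto
          qed
          with n xinf show ?thesis unfolding D_def by (intro exI[of _ "\<lambda>_. enat n"]) auto
        next
          case False
          then obtain f where f: "\<forall>n\<in>D. n \<notin> B (f n)" by metis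
          have inf: "infinite (D \<inter> B \<alpha>)" for \<alpha>
          proof
            assume fin: "finite (D \<inter> B \<alpha>)"
            define F where "F = insert \<alpha> (f ` (D \<inter> B \<alpha>))"
            have "finite F" using fin unfolding F_def by simp
            then have "openin (gap_space B) ((\<Inter>\<beta>\<in>F. enat ` B \<beta>) \<union> {\<infinity>})"
              unfolding openin_gap by blast
            then obtain y where y: "y \<in> S" "y \<in> (\<Inter>\<beta>\<in>F. enat ` B \<beta>) \<union> {\<infinity>}"
              using cl xinf by blast
            have "y \<noteq> \<infinity>"
            proof
              assume "y = \<infinity>" with y(1) xS xinf show False by simp
            qed
            then have "y \<in> (\<Inter>\<beta>\<in>F. enat ` B \<beta>)" using y(2) by blast
            then have "y \<in> enat ` B \<alpha>" unfolding F_def by auto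
            then obtain n where n: "y = enat n" "n \<in> B \<alpha>" by auto
            then have "n \<in> D" using y unfolding D_def by auto
            then have "f n \<in> F" using n unfolding F_def by auto
            then have "y \<in> enat ` B (f n)" using \<open>y \<in> (\<Inter>\<beta>\<in>F. enat ` B \<beta>)\<close> by auto
            then have "n \<in> B (f n)" using n by auto
            with f \<open>n \<in> D\<close> show False by auto
          qed
          have "\<exists>\<alpha>. infinite (D \<inter> A \<alpha>)"
          proof (rule ccontr)
            assume "\<not> ?thesis"
            moreover have "\<And>X. X - (UNIV - D) = D \<inter> X" by blast
            ultimately have "\<forall>\<alpha>. A \<alpha> \<subseteq>\<^sup>* (UNIV - D)" unfolding almost_subset_def
              by simp
            then obtain \<beta> where "B \<beta> \<subseteq>\<^sup>* (UNIV - D)" using tg4 by blast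
            moreover have "B \<beta> - (UNIV - D) = D \<inter> B \<beta>" by blast
            ultimately have "finite (D \<inter> B \<beta>)" unfolding almost_subset_def
              by simp
            with inf show False by blast
          qed
          then obtain \<alpha> where inf2: "infinite (D \<inter> A \<alpha>)" by blast
          have "converges_to_inf (gap_space B) (D \<inter> A \<alpha>)"
            unfolding P1 by (intro exI[of _ \<alpha>] asub_mono) auto
          from inf_limit[OF this inf2] have "limitin (gap_space B) (\<lambda>n. enat (enumerate (D \<inter> A \<alpha>) n)) x sequentially"
            using xinf by simp
          moreover have "range (\<lambda>n. enat (enumerate (D \<inter> A \<alpha>) n)) \<subseteq> S"
            using range_enumerate[OF inf2] unfolding D_def by auto
          ultimately show ?thesis by blast
        qed
      qed
    qed
  qed
  have alp: "alpha1_space (gap_space B)"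
    unfolding alpha1_space_def topspace_gap
  proof (intro ballI allI impI)
    fix x and s :: "nat \<Rightarrow> nat \<Rightarrow> enat"
    assume "\<forall>n. range (s n) \<subseteq> UNIV \<and> limitin (gap_space B) (s n) x sequentially"
    then have lim: "\<And>n U. openin (gap_space B) U \<Longrightarrow> x \<in> U \<Longrightarrow> finite {j. s n j \<notin> U}"
      unfolding limitin_def cofinite_eq_sequentially[symmetric] eventually_cofinite by blast
    show "\<exists>t. range t \<subseteq> UNIV \<and> limitin (gap_space B) t x sequentially \<and> (\<forall>n. finite (range (s n) - range t))"
    proof (cases "x = \<infinity>")
      case False
      then obtain m where m: "x = enat m" by (cases x) auto
      have "openin (gap_space B) {enat m}" unfolding openin_gap by simp
      then have fin: "finite {j. s n j \<notin> {enat m}}" for n using lim[of "{enat m}" n] m by blast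
      have "finite (range (s n) - range (\<lambda>_. x))" for n
        by (rule finite_subset[OF _ finite_imageI[OF fin[of n], of "s n"]]) (auto simp: m)
      then show ?thesis by (intro exI[of _ "\<lambda>_. x"]) (auto simp: topspace_gap)
    next
      case xinf: True
      define En where "En n = {k. enat k \<in> range (s n)}" for n
      have conv: "converges_to_inf (gap_space B) (En n)" for n
        unfolding converges_to_inf_def
      proof (intro allI impI)
        fix U assume U: "openin (gap_space B) U \<and> \<infinity> \<in> U"
        have "{k \<in> En n. enat k \<notin> U} \<subseteq> the_enat ` s n ` {j. s n j \<notin> U}"
        proof
          fix k assume "k \<in> {k \<in> En n. enat k \<notin> U}"
          then obtain j where "enat k = s n j" "enat k \<notin> U" unfolding En_def by auto
          then show "k \<in> the_enat ` s n ` {j. s n j \<notin> U}"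
            by (intro image_eqI[of _ _ "s n j"]) (auto simp: image_iff dest: sym)
        qed
        moreover have "finite {j. s n j \<notin> U}" using lim U xinf by auto
        ultimately show "finite {k \<in> En n. enat k \<notin> U}"
          by (meson finite_imageI finite_subset)
      qed
      have "\<forall>n. \<exists>\<alpha>. En n \<subseteq>\<^sup>* A \<alpha>"
      proof
        fix n show "\<exists>\<alpha>. En n \<subseteq>\<^sup>* A \<alpha>"
        proof (cases "finite (En n)")
          case True then show ?thesis unfolding almost_subset_def by simp
        next
          case False then show ?thesis using conv P1 by blast
        qed
      qed
      then obtain a where a: "\<And>n. En n \<subseteq>\<^sup>* A (a n)" by metis
      obtain \<beta> where \<beta>: "\<forall>i\<in>range a. i < \<beta>"
        using countable_bound[OF assms(1), of "range a"] by auto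
      have Enb: "En n \<subseteq>\<^sup>* A \<beta>" for n
        using asub_trans[OF a tgA] \<beta> by auto
      then have Enb': "finite (En n - A \<beta>)" for n unfolding almost_subset_def by simp
      define E where "E = (\<Union>n. En n \<inter> A \<beta>)"
      have convE: "converges_to_inf (gap_space B) E"
        unfolding P1 E_def by (intro exI[of _ \<beta>] asub_mono) auto
      show ?thesis
      proof (cases "finite E")
        case False
        have "limitin (gap_space B) (\<lambda>j. enat (enumerate E j)) x sequentially"
          using inf_limit[OF convE False] xinf by simp
        moreover have "finite (range (s n) - range (\<lambda>j. enat (enumerate E j)))" for n
        proof (rule finite_subset)
          show "range (s n) - range (\<lambda>j. enat (enumerate E j)) \<subseteq> insert \<infinity> (enat ` (En n - A \<beta>))"
          proof
            fix y assume y: "y \<in> range (s n) - range (\<lambda>j. enat (enumerate E j))"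
            show "y \<in> insert \<infinity> (enat ` (En n - A \<beta>))"
            proof (cases y)
              case (enat k)
              then have "k \<in> En n" using y unfolding En_def by auto
              moreover have "k \<notin> E" using y enat range_enumerate[OF False]
                by (metis DiffE image_eqI rangeI image_image)
              ultimately show ?thesis using enat unfolding E_def by auto
            qed auto
          qed
          show "finite (insert \<infinity> (enat ` (En n - A \<beta>)))" using Enb' by simp
        qed
        ultimately show ?thesis by blast
      next
        case True
        have "finite (range (s n) - range (\<lambda>_. \<infinity>))" for n
        proof (rule finite_subset)
          show "range (s n) - range (\<lambda>_. \<infinity>) \<subseteq> enat ` ((En n - A \<beta>) \<union> E)"
          proof
            fix y assume y: "y \<in> range (s n) - range (\<lambda>_. \<infinity>)"
            then obtain k where k: "y = enat k" by (cases y) auto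
            then have "k \<in> En n" using y unfolding En_def by auto
            then show "y \<in> enat ` ((En n - A \<beta>) \<union> E)" using k unfolding E_def by auto
          qed
          show "finite (enat ` ((En n - A \<beta>) \<union> E))" using Enb' True by simp
        qed
        then show ?thesis using xinf by (intro exI[of _ "\<lambda>_. \<infinity>"]) (auto simp: topspace_gap)
      qed
    qed
  qed
  show ?thesis using P1 fre alp by blast
qed

end
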